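(* Consider a rule of the PJR-Exact family run on $(\mathcal{A},k)$, and fix $j$ with $1\le j\le k-1$ such that iterations $1,\dots,j$ are all normal. Then no candidate in $C\setminus W_j$ is in a starving state after $j$ iterations; i.e., for every $c\in C\setminus W_j$ and every $i\in N_c$ with $\ell_j(i,c)>|A_i\cap W_j|$, we have $f_i^j\ge\frac{\ell_j(i,c)-|A_i\cap W_j|}{\ell_j(i,c)}$.
   Context: Setting: voters $N=\{1,\dots,n\}$, candidates $C=\{c_1,\dots,c_m\}$, approval ballots $A_i\subseteq C$, $\mathcal{A}=(A_1,\dots,A_n)$, $k$ a positive integer with $k\le|C|$, $q=n/k$, $N_c=\{i: c\in A_i\}$. Convention: $\max\emptyset=0$. Dissatisfaction level: for $W\subseteq C$ with $|W|\le k$ and $c\in C\setminus W$, $\ell(c,W)$ is the largest nonnegative integer $\ell$ with $\ell=\lfloor \frac{k}{n}|\{i\in N: c\in A_i,\ |A_i\cap W|<\ell\}|\rfloor$. PJR-Exact family: iterative procedures selecting $w_1,\dots,w_k$, $W_0=\emptyset$, $W_j=W_{j-1}\cup\{w_j\}$, $w_j\notin W_{j-1}$, with vote fractions $f_i^0=1$, $0\le f_i^j\le f_i^{j-1}$, such that at each iteration $j$: (a) $f_i^j=f_i^{j-1}$ for $i\notin N_{w_j}$; (b) with $s=\sum_{i\in N_{w_j}}f_i^{j-1}$, if $s>q$ then $\sum_{i\in N_{w_j}}(f_i^{j-1}-f_i^j)=q$, and if $s\le q$ then $f_i^j=0$ for all $i\in N_{w_j}$; (c) if some $c\in C\setminus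 W_{j-1}$ has $\sum_{i\in N_c}f_i^{j-1}\ge q$ then $\sum_{i\in N_{w_j}}f_i^{j-1}\ge q$. Notation along a run: $\ell_j(c)=\ell(c,W_j)$ for $c\in C\setminus W_j$; for $c\in C\setminus W_j$ and $i\in N_c$, $\ell_j(i,c)=\max_{c'\in A_i\setminus(W_j\cup\{c\})}\ell_j(c')$; $g_i^j(c)=0$ if $\ell_j(i,c)\le|A_i\cap W_j|$ and $g_i^j(c)=\frac{\ell_j(i,c)-|A_i\cap W_j|-1}{\ell_j(i,c)}$ otherwise. Normal state: $c\in C\setminus W_j$ is in normal state after $j$ iterations if (1) for each $i\in N_c$ with $\ell_j(i,c)>|A_i\cap W_j|$ we have $f_i^j\ge\frac{\ell_j(i,c)-|A_i\cap W_j|}{\ell_j(i,c)}$, and (2) $\sum_{i\in N_c}(f_i^j-g_i^j(c))\ge q$. A candidate $c\in C\setminus W_j$ is in a starving state after $j$ iterations if condition (1) fails. Normal iteration: iteration $j$ ($1\le j\le k$) is normal if $w_j$ is in normal state after $j-1$ iterations and, for each $i\in N_{w_j}$ with $\ell_{j-1}(i,w_j)>|A_i\cap W_{j-1}|$, $f_i^j\ge\frac{\ell_{j-1}(i,w_j)-|A_i\cap W_j|}{\ell_{j-1}(i,w_j)}$. *)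

theory Defs
  imports Complex_Main
begin

text \<open>A run of a rule is given by the selected candidates
  w 1, ..., w k and the vote fractions f j i (f j i is f_i^j).\<close>

definition approvers :: "'v set \<Rightarrow> ('v \<Rightarrow> 'c set) \<Rightarrow> 'c \<Rightarrow> 'v set" where
  "approvers N A c = {i \<in> N. c \<in> A i}"

definition quota :: "'v set \<Rightarrow> nat \<Rightarrow> real" where
  "quota N k = real (card N) / real k"

definition dlevel :: "'v set \<Rightarrow> ('v \<Rightarrow> 'c set) \<Rightarrow> nat \<Rightarrow> 'c set \<Rightarrow> 'c \<Rightarrow> nat" where
  "dlevel N A k W c = (GREATEST l::nat. int l =
      \<lfloor>real k / real (card N) * real (card {i \<in> N. c \<in> A i \<and> card (A i \<inter> W) < l})\<rfloor>)"

definition Wset :: "(nat \<Rightarrow> 'c) \<Rightarrow> nat \<Rightarrow> 'c set" where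
  "Wset w j = w ` {1..j}"

definition dl :: "'v set \<Rightarrow> ('v \<Rightarrow> 'c set) \<Rightarrow> nat \<Rightarrow> (nat \<Rightarrow> 'c) \<Rightarrow> nat \<Rightarrow> 'c \<Rightarrow> nat" where
  "dl N A k w j c = dlevel N A k (Wset w j) c"

definition dlv :: "'v set \<Rightarrow> ('v \<Rightarrow> 'c set) \<Rightarrow> nat \<Rightarrow> (nat \<Rightarrow> 'c) \<Rightarrow> nat \<Rightarrow> 'v \<Rightarrow> 'c \<Rightarrow> nat" where
  "dlv N A k w j i c = Max (insert 0 (dl N A k w j ` (A i - (Wset w j \<union> {c}))))"

definition gfun :: "'v set \<Rightarrow> ('v \<Rightarrow> 'c set) \<Rightarrow> nat \<Rightarrow> (nat \<Rightarrow> 'c) \<Rightarrow> nat \<Rightarrow> 'v \<Rightarrow> 'c \<Rightarrow> real" where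
  "gfun N A k w j i c =
     (if dlv N A k w j i c \<le> card (A i \<inter> Wset w j) then 0
      else (real (dlv N A k w j i c) - real (card (A i \<inter> Wset w j)) - 1) / real (dlv N A k w j i c))"

definition cond1 :: "'v set \<Rightarrow> ('v \<Rightarrow> 'c set) \<Rightarrow> nat \<Rightarrow> (nat \<Rightarrow> 'c) \<Rightarrow> (nat \<Rightarrow> 'v \<Rightarrow> real) \<Rightarrow> nat \<Rightarrow> 'c \<Rightarrow> bool" where
  "cond1 N A k w f j c = (\<forall>i \<in> approvers N A c.
      dlv N A k w j i c > card (A i \<inter> Wset w j) \<longrightarrow>
      f j i \<ge> (real (dlv N A k w j i c) - real (card (A i \<inter> Wset w j))) / real (dlv N A k w j i c))"

definition normal_state :: "'v set \<Rightarrow> ('v \<Rightarrow> 'c set) \<Rightarrow> nat \<Rightarrow> (nat \<Rightarrow> 'c) \<Rightarrow> (nat \<Rightarrow> 'v \<Rightarrow> real) \<Rightarrow> nat \<Rightarrow> 'c \<Rightarrow> bool" where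
  "normal_state N A k w f j c = (cond1 N A k w f j c \<and>
      (\<Sum>i \<in> approvers N A c. f j i - gfun N A k w j i c) \<ge> quota N k)"

definition starving :: "'v set \<Rightarrow> ('v \<Rightarrow> 'c set) \<Rightarrow> nat \<Rightarrow> (nat \<Rightarrow> 'c) \<Rightarrow> (nat \<Rightarrow> 'v \<Rightarrow> real) \<Rightarrow> nat \<Rightarrow> 'c \<Rightarrow> bool" where
  "starving N A k w f j c = (\<not> cond1 N A k w f j c)"

definition normal_iteration :: "'v set \<Rightarrow> ('v \<Rightarrow> 'c set) \<Rightarrow> nat \<Rightarrow> (nat \<Rightarrow> 'c) \<Rightarrow> (nat \<Rightarrow> 'v \<Rightarrow> real) \<Rightarrow> nat \<Rightarrow> bool" where
  "normal_iteration N A k w f j = (normal_state N A k w f (j - 1) (w j) \<and>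
     (\<forall>i \<in> approvers N A (w j).
        dlv N A k w (j - 1) i (w j) > card (A i \<inter> Wset w (j - 1)) \<longrightarrow>
        f j i \<ge> (real (dlv N A k w (j - 1) i (w j)) - real (card (A i \<inter> Wset w j)))
                 / real (dlv N A k w (j - 1) i (w j))))"

definition pjr_exact_run :: "'v set \<Rightarrow> 'c set \<Rightarrow> ('v \<Rightarrow> 'c set) \<Rightarrow> nat \<Rightarrow> (nat \<Rightarrow> 'c) \<Rightarrow> (nat \<Rightarrow> 'v \<Rightarrow> real) \<Rightarrow> bool" where
  "pjr_exact_run N C A k w f =
    ((\<forall>i \<in> N. f 0 i = 1) \<and>
     (\<forall>j \<in> {1..k}.
        w j \<in> C \<and> w j \<notin> Wset w (j - 1) \<and>
        (\<forall>i \<in> N. 0 \<le> f j i \<and> f j i \<le> f (j - 1) i) \<and>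
        (\<forall>i \<in> N - approvers N A (w j). f j i = f (j - 1) i) \<and>
        (let s = (\<Sum>i \<in> approvers N A (w j). f (j - 1) i) in
           (s > quota N k \<longrightarrow> (\<Sum>i \<in> approvers N A (w j). f (j - 1) i - f j i) = quota N k) \<and>
           (s \<le> quota N k \<longrightarrow> (\<forall>i \<in> approvers N A (w j). f j i = 0))) \<and>
        ((\<exists>c \<in> C - Wset w (j - 1). (\<Sum>i \<in> approvers N A c. f (j - 1) i) \<ge> quota N k) \<longrightarrow>
           (\<Sum>i \<in> approvers N A (w j). f (j - 1) i) \<ge> quota N k)))"

end

theory Submission
  imports Defs
begin

lemma fp_exists:
  fixes h :: "nat \<Rightarrow> int"
  assumes "mono h" "\<forall>l. h l \<le> int b"
  shows "int l \<le> h l \<Longrightarrow> \<exists>p\<ge>l. int p = h p"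
proof (induction "b - l" arbitrary: l rule: less_induct)
  case less
  show ?case
  proof (cases "int l = h l")
    case True then show ?thesis by auto
  next
    case False
    then have lt: "int l < h l" using less.prems by auto
    then have "l < b" using assms(2) by (metis of_nat_less_iff order_less_le_trans)
    have "h l \<le> h (Suc l)" using assms(1) by (simp add: monoD)
    then have "int (Suc l) \<le> h (Suc l)" using lt by simp
    have "b - Suc l < b - l" using \<open>l < b\<close> by simp
    from less.hyps[OF this \<open>int (Suc l) \<le> h (Suc l)\<close>] obtain p where "p \<ge> Suc l" "int p = h p" by auto
    then show ?thesis by (intro exI[of _ p]) auto
  qed
qed

lemma greatest_mono:
  fixes h h' :: "nat \<Rightarrow> int"
  assumes "mono h" "\<forall>l. h l \<le> int b" "\<forall>l. h' l \<le> h l" "h' 0 = 0" "h 0 = 0"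
  shows "(GREATEST l. int l = h' l) \<le> (GREATEST l. int l = h l)"
proof -
  have bd: "\<And>g y. (\<forall>l. g l \<le> int b) \<Longrightarrow> int y = g y \<Longrightarrow> y \<le> b"
    by (metis of_nat_le_iff)
  have b': "\<forall>l. h' l \<le> int b" using assms(2,3) order_trans by blast
  define m' where "m' = (GREATEST l. int l = h' l)"
  define m where "m = (GREATEST l. int l = h l)"
  have fm': "int m' = h' m'" unfolding m'_def
    by (rule GreatestI_nat[where k=0 and b=b]) (use assms(4) bd[OF b'] in auto)
  have gm: "\<And>y. int y = h y \<Longrightarrow> y \<le> m" unfolding m_def
    by (rule Greatest_le_nat[where b=b]) (use bd[OF assms(2)] in auto)
  show ?thesis unfolding m'_def[symmetric] m_def[symmetric]
  proof (rule ccontr)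
    assume "\<not> m' \<le> m"
    then have "m < m'" by simp
    have "h m' < int m'"
    proof (rule ccontr)
      assume "\<not> h m' < int m'"
      then obtain p where "p \<ge> m'" "int p = h p" using fp_exists[OF assms(1,2)] by force
      then show False using gm \<open>m < m'\<close> by fastforce
    qed
    then show False using fm' assms(3) by (metis not_le)
  qed
qed

lemma dlevel_mono:
  assumes "finite N" "W \<subseteq> W'" "finite W'"
  shows "dlevel N A k W' c \<le> dlevel N A k W c"
proof -
  define h where "h = (\<lambda>V l. \<lfloor>real k / real (card N) * real (card {i \<in> N. c \<in> A i \<and> card (A i \<inter> V) < l})\<rfloor>)"
  have cle: "\<And>V l. card {i \<in> N. c \<in> A i \<and> card (A i \<inter> V) < l} \<le> card N"
    using assms(1) by (intro card_mono) auto
  have bnd: "\<And>V l. h V l \<le> int k"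
  proof -
    fix V l
    have "real k / real (card N) * real (card {i \<in> N. c \<in> A i \<and> card (A i \<inter> V) < l}) \<le> real k"
    proof (cases "card N = 0")
      case True then show ?thesis by simp
    next
      case False
      have "real k / real (card N) * real (card {i \<in> N. c \<in> A i \<and> card (A i \<inter> V) < l})
          \<le> real k / real (card N) * real (card N)"
        using cle[of V l] by (intro mult_left_mono) auto
      also have "\<dots> = real k" using False by simp
      finally show ?thesis .
    qed
    then show "h V l \<le> int k" unfolding h_def by (metis floor_mono floor_of_nat)
  qed
  have mono: "mono (h W)" unfolding h_def
  proof (rule monoI)
    fix x y :: nat assume "x \<le> y"
    have "card {i \<in> N. c \<in> A i \<and> card (A i \<inter> W) < x} \<le> card {i \<in> N. c \<in> A i \<and> card (A i \<inter> W) < y}"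
      using assms(1) \<open>x \<le> y\<close> by (intro card_mono) auto
    then show "\<lfloor>real k / real (card N) * real (card {i \<in> N. c \<in> A i \<and> card (A i \<inter> W) < x})\<rfloor>
      \<le> \<lfloor>real k / real (card N) * real (card {i \<in> N. c \<in> A i \<and> card (A i \<inter> W) < y})\<rfloor>"
      by (intro floor_mono mult_left_mono) auto
  qed
  have le: "\<forall>l. h W' l \<le> h W l" unfolding h_def
  proof
    fix l
    have "card {i \<in> N. c \<in> A i \<and> card (A i \<inter> W') < l} \<le> card {i \<in> N. c \<in> A i \<and> card (A i \<inter> W) < l}"
    proof (intro card_mono)
      show "finite {i \<in> N. c \<in> A i \<and> card (A i \<inter> W) < l}" using assms(1) by auto
      show "{i \<in> N. c \<in> A i \<and> card (A i \<inter> W') < l} \<subseteq> {i \<in> N. c \<in> A i \<and> card (A i \<inter> W) < l}"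
      proof
        fix i assume "i \<in> {i \<in> N. c \<in> A i \<and> card (A i \<inter> W') < l}"
        moreover have "card (A i \<inter> W) \<le> card (A i \<inter> W')"
          using assms(2,3) by (intro card_mono) auto
        ultimately show "i \<in> {i \<in> N. c \<in> A i \<and> card (A i \<inter> W) < l}" by auto
      qed
    qed
    then show "\<lfloor>real k / real (card N) * real (card {i \<in> N. c \<in> A i \<and> card (A i \<inter> W') < l})\<rfloor>
      \<le> \<lfloor>real k / real (card N) * real (card {i \<in> N. c \<in> A i \<and> card (A i \<inter> W) < l})\<rfloor>"
      by (intro floor_mono mult_left_mono) auto
  qed
  have z: "\<And>V. h V 0 = 0" unfolding h_def by simp
  have "(GREATEST l. int l = h W' l) \<le> (GREATEST l. int l = h W l)"
    by (rule greatest_mono[OF mono _ le z z]) (use bnd in auto)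
  then show ?thesis unfolding dlevel_def h_def by simp
qed

lemma Wset_Suc: "Wset w (Suc t) = insert (w (Suc t)) (Wset w t)"
  unfolding Wset_def by (auto simp: atLeastAtMostSuc_conv)

lemma Wset_0: "Wset w 0 = {}" unfolding Wset_def by simp

lemma finite_Wset: "finite (Wset w t)" unfolding Wset_def by simp

lemma dl_Suc: "finite N \<Longrightarrow> dl N A k w (Suc t) c \<le> dl N A k w t c"
  unfolding dl_def by (rule dlevel_mono) (auto simp: Wset_Suc finite_Wset)

lemma max_mono:
  fixes g g' :: "'a \<Rightarrow> nat"
  assumes "S \<subseteq> T" "finite T" "\<forall>x\<in>S. g x \<le> g' x"
  shows "Max (insert 0 (g ` S)) \<le> Max (insert 0 (g' ` T))"
proof -
  have fT: "finite (insert 0 (g' ` T))" using assms(2) by simp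
  show ?thesis
  proof (rule Max.boundedI)
    show "finite (insert 0 (g ` S))" using assms(1,2) finite_subset by auto
    show "insert 0 (g ` S) \<noteq> {}" by simp
    fix a assume "a \<in> insert 0 (g ` S)"
    then show "a \<le> Max (insert 0 (g' ` T))"
    proof
      assume "a = 0" then show ?thesis by simp
    next
      assume "a \<in> g ` S"
      then obtain x where "x \<in> S" "a = g x" by auto
      then have "a \<le> g' x" using assms(3) by auto
      also have "g' x \<le> Max (insert 0 (g' ` T))" using fT \<open>x \<in> S\<close> assms(1) by (intro Max_ge) auto
      finally show ?thesis .
    qed
  qed
qed

lemma frac_mono:
  fixes a L L' :: real
  assumes "0 \<le> a" "a < L" "L \<le> L'"
  shows "(L - a) / L \<le> (L' - a) / L'"
proof -
  have "L > 0" "L' > 0" using assms by auto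
  have "a * L \<le> a * L'" using assms by (intro mult_left_mono) auto
  then show ?thesis using \<open>L > 0\<close> \<open>L' > 0\<close> by (simp add: field_simps)
qed

theorem mainTheorem4:
  fixes N :: "'v set" and C :: "'c set" and A :: "'v \<Rightarrow> 'c set" and k :: nat
    and w :: "nat \<Rightarrow> 'c" and f :: "nat \<Rightarrow> 'v \<Rightarrow> real" and j :: nat
  assumes "finite N" and "N \<noteq> {}" and "finite C"
    and "\<forall>i \<in> N. A i \<subseteq> C"
    and "0 < k" and "k \<le> card C"
    and "pjr_exact_run N C A k w f"
    and "1 \<le> j" and "j \<le> k - 1"
    and "\<forall>t \<in> {1..j}. normal_iteration N A k w f t"
  shows "\<forall>c \<in> C - Wset w j. \<not> starving N A k w f j c"
proof -
  note run = assms(7)[unfolded pjr_exact_run_def]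
  have finA: "\<And>i. i \<in> N \<Longrightarrow> finite (A i)" using assms(3,4) finite_subset by blast
  have "t \<le> j \<Longrightarrow> (\<forall>c. c \<notin> Wset w t \<longrightarrow> cond1 N A k w f t c)" for t
  proof (induction t)
    case 0
    show ?case unfolding cond1_def approvers_def using run by auto
  next
    case (Suc t)
    then have IH: "\<And>c. c \<notin> Wset w t \<Longrightarrow> cond1 N A k w f t c" by auto
    have tk: "Suc t \<in> {1..k}" using Suc.prems assms(9) by auto
    define x where "x = w (Suc t)"
    have xW: "x \<notin> Wset w t" using run tk unfolding x_def by (metis diff_Suc_1)
    have fsame: "\<And>i. i \<in> N - approvers N A x \<Longrightarrow> f (Suc t) i = f t i"
      using run tk unfolding x_def by auto
    have ni: "normal_iteration N A k w f (Suc t)" using assms(10) Suc.prems by auto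
    then have nistep: "\<And>i. i \<in> approvers N A x \<Longrightarrow> dlv N A k w t i x > card (A i \<inter> Wset w t) \<Longrightarrow>
        f (Suc t) i \<ge> (real (dlv N A k w t i x) - real (card (A i \<inter> Wset w (Suc t))))
                 / real (dlv N A k w t i x)"
      unfolding normal_iteration_def x_def by auto
    have WS: "Wset w (Suc t) = insert x (Wset w t)" unfolding x_def by (rule Wset_Suc)
    show ?case unfolding cond1_def
    proof (intro allI impI ballI)
      fix c i
      assume cW: "c \<notin> Wset w (Suc t)" and iA: "i \<in> approvers N A c"
        and gt: "card (A i \<inter> Wset w (Suc t)) < dlv N A k w (Suc t) i c"
      have iN: "i \<in> N" using iA unfolding approvers_def by auto
      define L where "L = dlv N A k w (Suc t) i c"
      define a where "a = card (A i \<inter> Wset w (Suc t))"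
      have dlle: "\<forall>y\<in>A i - (Wset w (Suc t) \<union> {c}). dl N A k w (Suc t) y \<le> dl N A k w t y"
        by (intro ballI dl_Suc[OF assms(1)])
      show "(real L - real a) / real L \<le> f (Suc t) i"
        unfolding L_def[symmetric] a_def[symmetric]
      proof (cases "x \<in> A i")
        case True
        have ix: "i \<in> approvers N A x" using True iN unfolding approvers_def by auto
        have aeq: "a = card (A i \<inter> Wset w t) + 1"
          unfolding a_def WS using True xW finite_Wset[of w t]
          by (simp add: Int_insert_right)
        define L' where "L' = dlv N A k w t i x"
        have "L \<le> L'" unfolding L_def L'_def dlv_def
          by (rule max_mono) (use dlle WS finA[OF iN] in auto)
        then have "card (A i \<inter> Wset w t) < L'" using gt aeq unfolding L_def a_def[symmetric] by simp
        from nistep[OF ix this[unfolded L'_def]]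
        have "(real L' - real a) / real L' \<le> f (Suc t) i" unfolding L'_def a_def .
        moreover have "(real L - real a) / real L \<le> (real L' - real a) / real L'"
          using \<open>L \<le> L'\<close> gt unfolding L_def[symmetric] a_def[symmetric] by (intro frac_mono) auto
        ultimately show ?thesis by linarith
      next
        case False
        have ix: "i \<in> N - approvers N A x" using False iN unfolding approvers_def by auto
        have aeq: "a = card (A i \<inter> Wset w t)"
          unfolding a_def WS using False by (simp add: Int_insert_right)
        have cW': "c \<notin> Wset w t" using cW WS by auto
        define L' where "L' = dlv N A k w t i c"
        have "L \<le> L'" unfolding L_def L'_def dlv_def
          by (rule max_mono) (use dlle WS finA[OF iN] in auto)
        then have "card (A i \<inter> Wset w t) < L'" using gt aeq unfolding L_def a_def[symmetric] by simp
        with IH[OF cW'] iA have "(real L' - real a) / real L' \<le> f t i"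
          unfolding cond1_def L'_def aeq by auto
        moreover have "(real L - real a) / real L \<le> (real L' - real a) / real L'"
          using \<open>L \<le> L'\<close> gt unfolding L_def[symmetric] a_def[symmetric] by (intro frac_mono) auto
        ultimately show ?thesis using fsame[OF ix] by linarith
      qed
    qed
  qed
  then show ?thesis unfolding starving_def by auto
qed

end
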